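(* For all $\alpha>0$, $\sigma^2>0$ and $\delta>0$, $$L\big(\psi_1(\alpha,\sigma^2);\delta\big)\le\psi_2(\alpha,\sigma^2;\delta).$$
   Context: For real $\alpha\ge0$, $\sigma^2\ge0$ with $(\alpha,\sigma^2)\ne(0,0)$: $\psi_1(\alpha,\sigma^2)=\int_0^{\pi/2}\frac{\alpha\sin^2\theta}{(\alpha^2\sin^2\theta+\sigma^2)^{1/2}}d\theta$ and $\psi_2(\alpha,\sigma^2;\delta)=\frac4\delta\big(\alpha^2+\sigma^2+1-\int_0^{\pi/2}\frac{2\alpha^2\sin^2\theta+\sigma^2}{(\alpha^2\sin^2\theta+\sigma^2)^{1/2}}d\theta\big)$. For $s\ge0$ let $\phi_1(s)=\int_0^{\pi/2}\frac{\sin^2\theta}{(\sin^2\theta+s^2)^{1/2}}d\theta$ (strictly decreasing, $\phi_1(0)=1$, $\phi_1(s)\to0$ as $s\to\infty$, with inverse $\phi_1^{-1}:(0,1]\to[0,\infty)$) and $\phi_2(s)=\int_0^{\pi/2}\frac{2\sin^2\theta+s^2}{(\sin^2\theta+s^2)^{1/2}}d\theta$. For $\alpha\in(0,1)$ and $\delta>0$ define $L(\alpha;\delta)=\frac4\delta\Big(1-\frac{\phi_2^2(\phi_1^{-1}(\alpha))}{4[1+(\phi_1^{-1}(\alpha))^2]}\Big)$. *)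

theory Defs
  imports "HOL-Analysis.Analysis"
begin

definition psi1 :: "real \<Rightarrow> real \<Rightarrow> real" where
  "psi1 \<alpha> \<sigma>2 = integral {0..pi/2}
     (\<lambda>\<theta>. \<alpha> * (sin \<theta>)^2 / sqrt (\<alpha>^2 * (sin \<theta>)^2 + \<sigma>2))"

definition psi2 :: "real \<Rightarrow> real \<Rightarrow> real \<Rightarrow> real" where
  "psi2 \<alpha> \<sigma>2 \<delta> = 4 / \<delta> * (\<alpha>^2 + \<sigma>2 + 1 - integral {0..pi/2}
     (\<lambda>\<theta>. (2 * \<alpha>^2 * (sin \<theta>)^2 + \<sigma>2) / sqrt (\<alpha>^2 * (sin \<theta>)^2 + \<sigma>2)))"

definition phi1 :: "real \<Rightarrow> real" where
  "phi1 s = integral {0..pi/2} (\<lambda>\<theta>. (sin \<theta>)^2 / sqrt ((sin \<theta>)^2 + s^2))"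

definition phi2 :: "real \<Rightarrow> real" where
  "phi2 s = integral {0..pi/2} (\<lambda>\<theta>. (2 * (sin \<theta>)^2 + s^2) / sqrt ((sin \<theta>)^2 + s^2))"

definition phi1_inv :: "real \<Rightarrow> real" where
  "phi1_inv a = (THE s. s \<ge> 0 \<and> phi1 s = a)"

definition L :: "real \<Rightarrow> real \<Rightarrow> real" where
  "L \<alpha> \<delta> = 4 / \<delta> * (1 - (phi2 (phi1_inv \<alpha>))^2 / (4 * (1 + (phi1_inv \<alpha>)^2)))"

end

theory Submission
  imports Defs
begin

lemma f_cont:
  fixes s :: real assumes "s \<ge> 0"
  shows "continuous_on {0..pi/2} (\<lambda>\<theta>. (sin \<theta>)^2 / sqrt ((sin \<theta>)^2 + s^2))"
proof (cases "s = 0")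
  case True
  have "continuous_on {0..pi/2} sin" by (intro continuous_intros)
  moreover have "\<And>\<theta>. \<theta> \<in> {0..pi/2} \<Longrightarrow> sin \<theta> = (sin \<theta>)^2 / sqrt ((sin \<theta>)^2 + s^2)"
  proof -
    fix \<theta> :: real assume "\<theta> \<in> {0..pi/2}"
    then have "sin \<theta> \<ge> 0" by (intro sin_ge_zero) auto
    then show "sin \<theta> = (sin \<theta>)^2 / sqrt ((sin \<theta>)^2 + s^2)"
      using True by (simp add: power2_eq_square)
  qed
  ultimately show ?thesis using continuous_on_cong by (smt (verit))
next
  case False
  then have "s > 0" using assms by simp
  have "\<And>\<theta>. sqrt ((sin \<theta>)^2 + s^2) \<noteq> 0"
    using \<open>s > 0\<close> by (smt (verit) real_sqrt_gt_zero zero_le_power2 zero_less_power)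
  then show ?thesis by (intro continuous_intros) auto
qed

lemma phi1_strict:
  fixes s t :: real assumes "0 \<le> s" "s < t"
  shows "phi1 t < phi1 s"
  unfolding phi1_def
proof (rule integral_less_real)
  show "continuous_on {0..pi/2} (\<lambda>\<theta>. (sin \<theta>)^2 / sqrt ((sin \<theta>)^2 + t^2))"
    using assms by (intro f_cont) auto
  show "continuous_on {0..pi/2} (\<lambda>\<theta>. (sin \<theta>)^2 / sqrt ((sin \<theta>)^2 + s^2))"
    using assms by (intro f_cont) auto
  show "{0<..<pi/2} \<noteq> {}" using pi_gt_zero by (simp add: not_le)
  fix x assume x: "x \<in> {0<..<pi/2::real}"
  then have sx: "sin x > 0" by (intro sin_gt_zero) auto
  have st: "s^2 < t^2" using assms by (simp add: power_strict_mono)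
  have "sqrt ((sin x)^2 + s^2) < sqrt ((sin x)^2 + t^2)" using st by simp
  moreover have "0 < sqrt ((sin x)^2 + s^2)" using sx by (simp add: add_pos_nonneg)
  moreover have "(sin x)^2 > 0" using sx by simp
  ultimately show "(sin x)^2 / sqrt ((sin x)^2 + t^2) < (sin x)^2 / sqrt ((sin x)^2 + s^2)"
    by (intro divide_strict_left_mono) auto
qed

lemma phi1_inv_phi1:
  fixes s :: real assumes "s \<ge> 0"
  shows "phi1_inv (phi1 s) = s"
  unfolding phi1_inv_def
proof (rule the_equality)
  show "0 \<le> s \<and> phi1 s = phi1 s" using assms by simp
  fix t assume "0 \<le> t \<and> phi1 t = phi1 s"
  then show "t = s" using phi1_strict assms by (metis linorder_neqE_linordered_idom less_irrefl)
qed

theorem mainTheorem13: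
  fixes \<alpha> \<sigma>2 \<delta> :: real
  assumes "\<alpha> > 0" and "\<sigma>2 > 0" and "\<delta> > 0"
  shows "L (psi1 \<alpha> \<sigma>2) \<delta> \<le> psi2 \<alpha> \<sigma>2 \<delta>"
proof -
  define s where "s = sqrt \<sigma>2 / \<alpha>"
  have s0: "s > 0" using assms unfolding s_def by simp
  have sig: "\<sigma>2 = \<alpha>^2 * s^2" using assms unfolding s_def by (simp add: power_divide)
  have sq: "\<And>\<theta>. sqrt (\<alpha>^2 * (sin \<theta>)^2 + \<sigma>2) = \<alpha> * sqrt ((sin \<theta>)^2 + s^2)"
  proof -
    fix \<theta>
    have "\<alpha>^2 * (sin \<theta>)^2 + \<sigma>2 = \<alpha>^2 * ((sin \<theta>)^2 + s^2)" using sig by (simp add: algebra_simps)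
    then show "sqrt (\<alpha>^2 * (sin \<theta>)^2 + \<sigma>2) = \<alpha> * sqrt ((sin \<theta>)^2 + s^2)"
      using assms by (simp add: real_sqrt_mult)
  qed
  have p1: "psi1 \<alpha> \<sigma>2 = phi1 s"
    unfolding psi1_def phi1_def sq using assms by simp
  have "(\<lambda>\<theta>. (2 * \<alpha>^2 * (sin \<theta>)^2 + \<sigma>2) / sqrt (\<alpha>^2 * (sin \<theta>)^2 + \<sigma>2))
      = (\<lambda>\<theta>. \<alpha> * ((2 * (sin \<theta>)^2 + s^2) / sqrt ((sin \<theta>)^2 + s^2)))"
  proof (rule ext)
    fix \<theta>
    show "(2 * \<alpha>^2 * (sin \<theta>)^2 + \<sigma>2) / sqrt (\<alpha>^2 * (sin \<theta>)^2 + \<sigma>2)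
      = \<alpha> * ((2 * (sin \<theta>)^2 + s^2) / sqrt ((sin \<theta>)^2 + s^2))"
    proof -
      define D where "D = sqrt ((sin \<theta>)^2 + s^2)"
      have "D > 0" unfolding D_def using s0 by (simp add: add_nonneg_pos)
      then show ?thesis unfolding sq[of \<theta>] D_def[symmetric] using assms by (simp add: sig power2_eq_square field_simps)
    qed
  qed
  then have I2: "integral {0..pi/2} (\<lambda>\<theta>. (2 * \<alpha>^2 * (sin \<theta>)^2 + \<sigma>2) / sqrt (\<alpha>^2 * (sin \<theta>)^2 + \<sigma>2)) = \<alpha> * phi2 s"
    unfolding phi2_def by (simp only: integral_mult_right)
  have p2: "psi2 \<alpha> \<sigma>2 \<delta> = 4 / \<delta> * (\<alpha>^2 * (1 + s^2) + 1 - \<alpha> * phi2 s)"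
    unfolding psi2_def I2 using sig by (simp add: algebra_simps)
  have Ls: "L (psi1 \<alpha> \<sigma>2) \<delta> = 4 / \<delta> * (1 - (phi2 s)^2 / (4 * (1 + s^2)))"
    unfolding L_def p1 phi1_inv_phi1[OF less_imp_le[OF s0]] ..
  define c where "c = 1 + s^2"
  define b where "b = phi2 s"
  have c0: "c > 0" unfolding c_def by (simp add: add_pos_nonneg)
  have key: "1 - b^2 / (4 * c) \<le> \<alpha>^2 * c + 1 - \<alpha> * b"
  proof -
    have "\<alpha>^2 * c + 1 - \<alpha> * b - (1 - b^2 / (4 * c)) = (2*\<alpha>*c - b)^2 / (4*c)"
      using c0 by (simp add: field_simps power2_eq_square)
    moreover have "(2*\<alpha>*c - b)^2 / (4*c) \<ge> 0" using c0 by simp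
    ultimately show ?thesis by linarith
  qed
  show ?thesis unfolding Ls p2 using key assms(3)
    unfolding b_def c_def by (intro mult_left_mono) auto
qed

end
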